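(* There exists an absolute constant $C>0$ such that the following holds. Let $n\ge 1$, let $\varepsilon\ge 0$, let $\ell\ge 2$ be an integer that is a power of $2$, and let $z=(z_1,\dots,z_n)$ be a sample from an $\varepsilon$-biased $2\ell$-wise independent distribution on $\{-1,1\}^n$. Then for every symmetric matrix $B\in\mathbb{R}^{n\times n}$, \[ \mathbb{E}\left[\left(z^T B z-\operatorname{tr}(B)\right)^{\ell}\right]\le \varepsilon\,\|B\|_{L_1}^{\ell}+C^{\ell}\max\left\{\sqrt{\ell}\,\|B\|_{S_2},\ \ell\,\|B\|_2\right\}^{\ell}. \]
   Context: A distribution on $\{-1,1\}^n$ is $\varepsilon$-biased $m$-wise independent if, when $x=(x_1,\dots,x_n)$ is drawn from it, for every nonempty set $y\subseteq\{1,\dots,n\}$ with $|y|\le m$ one has $\left|\mathbb{E}\left[\prod_{i\in y}x_i\right]\right|\le\varepsilon$. For a matrix $A\in\mathbb{R}^{n\times n}$: $\|A\|_{L_1}=\sum_{i,j}|A_{i,j}|$; $\|A\|_2=\max_{\|x\|_2=1}\|Ax\|_2$ is the operator norm; $\|A\|_{S_2}=(\operatorname{tr}(AA^T))^{1/2}$ is the Frobenius norm. *)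

theory Defs
  imports "HOL-Probability.Probability"
begin

text \<open>Vectors in R^n are functions nat => real (only indices < n matter);
  n x n matrices are functions nat => nat => real (only indices < n matter).\<close>

definition hypercube :: "nat \<Rightarrow> (nat \<Rightarrow> real) set" where
  "hypercube n = {x. (\<forall>i<n. x i = -1 \<or> x i = 1) \<and> (\<forall>i\<ge>n. x i = 0)}"

definition eps_biased_indep :: "nat \<Rightarrow> real \<Rightarrow> nat \<Rightarrow> (nat \<Rightarrow> real) pmf \<Rightarrow> bool" where
  "eps_biased_indep n eps m D \<longleftrightarrow>
     set_pmf D \<subseteq> hypercube n \<and>
     (\<forall>y. y \<subseteq> {0..<n} \<and> y \<noteq> {} \<and> card y \<le> m \<longrightarrow>
        \<bar>measure_pmf.expectation D (\<lambda>x. \<Prod>i\<in>y. x i)\<bar> \<le> eps)"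

definition mat_L1 :: "nat \<Rightarrow> (nat \<Rightarrow> nat \<Rightarrow> real) \<Rightarrow> real" where
  "mat_L1 n A = (\<Sum>i<n. \<Sum>j<n. \<bar>A i j\<bar>)"

definition mat_frob :: "nat \<Rightarrow> (nat \<Rightarrow> nat \<Rightarrow> real) \<Rightarrow> real" where
  "mat_frob n A = sqrt (\<Sum>i<n. \<Sum>j<n. (A i j)\<^sup>2)"

definition vec_norm2 :: "nat \<Rightarrow> (nat \<Rightarrow> real) \<Rightarrow> real" where
  "vec_norm2 n x = sqrt (\<Sum>i<n. (x i)\<^sup>2)"

definition mat_vec :: "nat \<Rightarrow> (nat \<Rightarrow> nat \<Rightarrow> real) \<Rightarrow> (nat \<Rightarrow> real) \<Rightarrow> (nat \<Rightarrow> real)" where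
  "mat_vec n A x = (\<lambda>i. \<Sum>j<n. A i j * x j)"

definition mat_opnorm :: "nat \<Rightarrow> (nat \<Rightarrow> nat \<Rightarrow> real) \<Rightarrow> real" where
  "mat_opnorm n A = Sup {vec_norm2 n (mat_vec n A x) | x. vec_norm2 n x = 1}"

definition mat_trace :: "nat \<Rightarrow> (nat \<Rightarrow> nat \<Rightarrow> real) \<Rightarrow> real" where
  "mat_trace n A = (\<Sum>i<n. A i i)"

definition quad_form :: "nat \<Rightarrow> (nat \<Rightarrow> nat \<Rightarrow> real) \<Rightarrow> (nat \<Rightarrow> real) \<Rightarrow> real" where
  "quad_form n A z = (\<Sum>i<n. \<Sum>j<n. z i * A i j * z j)"

end

theory Submission
  imports Defs
begin


lemma hyp_finite: "finite (hypercube n)"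
proof -
  have "hypercube n \<subseteq> (\<lambda>S i. if i \<in> S then 1 else if i < n then -1 else 0) ` Pow {..<n}"
  proof
    fix x assume x: "x \<in> hypercube n"
    show "x \<in> (\<lambda>S i. if i \<in> S then 1 else if i < n then -1 else (0::real)) ` Pow {..<n}"
    proof (rule image_eqI[where x="{i. i<n \<and> x i = 1}"])
      show "x = (\<lambda>i. if i \<in> {i. i<n \<and> x i = 1} then 1 else if i < n then -1 else 0)"
        using x unfolding hypercube_def by (force simp: fun_eq_iff)
    qed auto
  qed
  then show ?thesis by (rule finite_subset) auto
qed

lemma hyp_nonempty: "(\<lambda>i. if i < n then 1 else 0) \<in> hypercube n"
  unfolding hypercube_def by auto

lemma hyp_card_pos: "card (hypercube n) > 0"
  using hyp_finite hyp_nonempty card_gt_0_iff by blast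

lemma hyp_sq: "z \<in> hypercube n \<Longrightarrow> i < n \<Longrightarrow> z i * z i = 1"
  unfolding hypercube_def by auto

lemma hyp_upd: "z \<in> hypercube n \<Longrightarrow> i < n \<Longrightarrow> c = 1 \<or> c = -1 \<Longrightarrow> z(i:=c) \<in> hypercube n"
  unfolding hypercube_def by auto

lemma avg:
  fixes f :: "(nat \<Rightarrow> real) \<Rightarrow> real"
  assumes "i < n"
  shows "(\<Sum>z\<in>hypercube n. f z) = (\<Sum>z\<in>hypercube n. (f (z(i:=1)) + f (z(i:=-1))) / 2)"
proof -
  let ?g = "\<lambda>z::nat\<Rightarrow>real. z(i := - z i)"
  have g: "?g z \<in> hypercube n" if "z \<in> hypercube n" for z
    using that assms unfolding hypercube_def by auto
  have "(\<Sum>z\<in>hypercube n. f z) = (\<Sum>z\<in>hypercube n. f (?g z))"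
    by (rule sum.reindex_bij_witness[where i="?g" and j="?g"]) (auto simp: g)
  moreover have "(\<Sum>z\<in>hypercube n. (f z + f (?g z)) / 2) = ((\<Sum>z\<in>hypercube n. f z) + (\<Sum>z\<in>hypercube n. f (?g z))) / 2"
    by (simp only: sum_divide_distrib[symmetric] sum.distrib)
  ultimately have "(\<Sum>z\<in>hypercube n. f z) = (\<Sum>z\<in>hypercube n. (f z + f (?g z)) / 2)"
    by simp
  also have "\<dots> = (\<Sum>z\<in>hypercube n. (f (z(i:=1)) + f (z(i:=-1))) / 2)"
  proof (rule sum.cong[OF refl])
    fix z assume z: "z \<in> hypercube n"
    then have "z i = 1 \<or> z i = -1" using assms unfolding hypercube_def by auto
    then show "(f z + f (?g z)) / 2 = (f (z(i:=1)) + f (z(i:=-1))) / 2"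
    proof
      assume h: "z i = 1"
      then have "z(i:=1) = z" by auto
      then show ?thesis using h by simp
    next
      assume h: "z i = -1"
      then have "z(i:=-1) = z" by auto
      then show ?thesis using h by simp
    qed
  qed
  finally show ?thesis .
qed

lemma char_zero:
  assumes "i \<in> Os" "Os \<subseteq> {..<n}" "finite Os"
  shows "(\<Sum>z\<in>hypercube n. \<Prod>j\<in>Os. z j :: real) = 0"
proof -
  have i: "i < n" using assms by auto
  have "(\<Sum>z\<in>hypercube n. \<Prod>j\<in>Os. z j) = (\<Sum>z\<in>hypercube n. ((\<Prod>j\<in>Os. (z(i:=1)) j) + (\<Prod>j\<in>Os. (z(i:=-1)) j)) / 2)"
    by (rule avg[OF i])
  also have "\<dots> = 0"
  proof (rule sum.neutral, rule ballI)
    fix z :: "nat \<Rightarrow> real"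
    have "(\<Prod>j\<in>Os. (z(i:=c)) j) = c * (\<Prod>j\<in>Os-{i}. z j)" for c
      proof -
      have "(\<Prod>j\<in>Os. (z(i:=c)) j) = (z(i:=c)) i * (\<Prod>j\<in>Os-{i}. (z(i:=c)) j)"
        using assms by (intro prod.remove) auto
      also have "(\<Prod>j\<in>Os-{i}. (z(i:=c)) j) = (\<Prod>j\<in>Os-{i}. z j)"
        by (intro prod.cong) auto
      finally show ?thesis by simp
    qed
    then show "((\<Prod>j\<in>Os. (z(i:=1)) j) + (\<Prod>j\<in>Os. (z(i:=-1)) j)) / 2 = 0" by simp
  qed
  finally show ?thesis .
qed


lemma ktrick:
  fixes s y K :: real
  assumes "s \<ge> 0" "y \<ge> 0" "K > 0"
  shows "s * y ^ m \<le> K ^ m * s ^ (m+1) + y ^ (m+1) / K"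
proof (cases "y \<le> K * s")
  case True
  have "y ^ m \<le> (K * s) ^ m" using True assms by (intro power_mono) auto
  then have "s * y ^ m \<le> s * (K * s)^m" using assms by (intro mult_left_mono) auto
  also have "\<dots> = K ^ m * s ^ (m+1)" by (simp add: power_mult_distrib)
  finally show ?thesis using assms by (smt (verit) divide_nonneg_pos zero_le_power)
next
  case False
  then have "s \<le> y / K" using assms by (simp add: field_simps)
  then have "s * y ^ m \<le> y / K * y ^ m" using assms by (intro mult_right_mono) auto
  also have "\<dots> = y ^ (m+1) / K" by simp
  finally show ?thesis using assms by (smt (verit) mult_nonneg_nonneg zero_le_power)
qed

lemma pow_diff_bound:
  fixes a b :: real
  assumes "q \<ge> 1"
  shows "\<bar>a ^ q - b ^ q\<bar> \<le> \<bar>a - b\<bar> * q * (\<bar>a\<bar> ^ (q-1) + \<bar>b\<bar> ^ (q-1))"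
proof -
  let ?M = "max \<bar>a\<bar> \<bar>b\<bar>"
  have "a ^ q - b ^ q = (a - b) * (\<Sum>k<q. b ^ (q - Suc k) * a ^ k)"
    by (rule power_diff_sumr2)
  then have e: "\<bar>a ^ q - b ^ q\<bar> = \<bar>a - b\<bar> * \<bar>\<Sum>k<q. b ^ (q - Suc k) * a ^ k\<bar>"
    by (simp add: abs_mult)
  have "\<bar>\<Sum>k<q. b ^ (q - Suc k) * a ^ k\<bar> \<le> (\<Sum>k<q. \<bar>b ^ (q - Suc k) * a ^ k\<bar>)"
    by (rule sum_abs)
  also have "\<dots> \<le> (\<Sum>k<q. ?M ^ (q - 1))"
  proof (rule sum_mono)
    fix k assume k: "k \<in> {..<q}"
    have "\<bar>b ^ (q - Suc k) * a ^ k\<bar> = \<bar>b\<bar> ^ (q - Suc k) * \<bar>a\<bar> ^ k"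
      by (simp add: abs_mult power_abs)
    also have "\<dots> \<le> ?M ^ (q - Suc k) * ?M ^ k"
      by (intro mult_mono power_mono) auto
    also have "\<dots> = ?M ^ (q - 1)"
      using k by (simp add: power_add[symmetric])
    finally show "\<bar>b ^ (q - Suc k) * a ^ k\<bar> \<le> ?M ^ (q - 1)" .
  qed
  also have "\<dots> = q * ?M ^ (q - 1)" by simp
  also have "\<dots> \<le> q * (\<bar>a\<bar> ^ (q-1) + \<bar>b\<bar> ^ (q-1))"
    by (intro mult_left_mono) (auto simp: max_def)
  finally show ?thesis using e
    by (metis (no_types, lifting) abs_ge_zero mult.assoc mult_left_mono)
qed

lemma stein_real:
  fixes R w :: real
  shows "w * ((R + 2*w) ^ (2*m+1) - (R - 2*w) ^ (2*m+1)) / 2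
    \<le> (4 * (2*m+1) * w^2 * (R + 2*w) ^ (2*m) + 4 * (2*m+1) * w^2 * (R - 2*w) ^ (2*m)) / 2"
proof -
  have b: "\<bar>(R + 2*w) ^ (2*m+1) - (R - 2*w) ^ (2*m+1)\<bar>
     \<le> \<bar>(R + 2*w) - (R - 2*w)\<bar> * real (2*m+1) * (\<bar>R + 2*w\<bar> ^ (2*m) + \<bar>R - 2*w\<bar> ^ (2*m))"
    using pow_diff_bound[of "2*m+1" "R+2*w" "R-2*w"] by simp
  have ev: "\<bar>x\<bar> ^ (2*m) = x ^ (2*m)" for x :: real
    by (simp add: power_mult power2_abs)
  have "w * ((R + 2*w) ^ (2*m+1) - (R - 2*w) ^ (2*m+1)) \<le> \<bar>w\<bar> * \<bar>(R + 2*w) ^ (2*m+1) - (R - 2*w) ^ (2*m+1)\<bar>"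
    by (metis abs_ge_self abs_mult)
  also have "\<dots> \<le> \<bar>w\<bar> * (\<bar>4*w\<bar> * real (2*m+1) * ((R + 2*w) ^ (2*m) + (R - 2*w) ^ (2*m)))"
    using b by (intro mult_left_mono) (auto simp: ev)
  also have "\<dots> = 4 * (2*m+1) * w^2 * (R + 2*w) ^ (2*m) + 4 * (2*m+1) * w^2 * (R - 2*w) ^ (2*m)"
    by (simp add: abs_mult algebra_simps power2_eq_square)
  finally have h: "w * ((R + 2*w) ^ (2*m+1) - (R - 2*w) ^ (2*m+1)) \<le> 4 * (2*m+1) * w^2 * (R + 2*w) ^ (2*m) + 4 * (2*m+1) * w^2 * (R - 2*w) ^ (2*m)" .
  show ?thesis using divide_right_mono[OF h, of 2] by (simp add: add.commute)
qed

lemma pow2_convex: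
  fixes a w :: real
  shows "(a + w) ^ (2^k) \<le> 2 ^ (2^k - 1) * (a ^ (2^k) + w ^ (2^k))"
proof (induction k arbitrary: a w)
  case 0 then show ?case by simp
next
  case (Suc k)
  have "(a + w) ^ (2^Suc k) = ((a+w)^2) ^ (2^k)" by (simp add: power_mult[symmetric] mult.commute)
  also have "\<dots> \<le> (2*(a^2 + w^2)) ^ (2^k)"
  proof (intro power_mono)
    have "0 \<le> (a - w)^2" by simp
    then show "(a+w)^2 \<le> 2*(a^2 + w^2)" by (simp add: power2_eq_square algebra_simps)
  qed simp
  also have "\<dots> = 2^(2^k) * (a^2 + w^2) ^ (2^k)" by (rule power_mult_distrib)
  also have "\<dots> \<le> 2^(2^k) * (2 ^ (2^k - 1) * ((a^2) ^ (2^k) + (w^2) ^ (2^k)))"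
    using Suc.IH[of "a^2" "w^2"] by (intro mult_left_mono) auto
  also have "\<dots> = 2 ^ (2^Suc k - 1) * (a ^ (2^Suc k) + w ^ (2^Suc k))"
  proof -
    have "(2::real)^(2^k) * 2 ^ (2^k - 1) = 2 ^ (2^k + (2^k - 1))"
      by (rule power_add[symmetric])
    also have "2^k + (2^k - 1) = 2^Suc k - (1::nat)" using one_le_power[of "2::nat" k] by simp
    finally have 1: "(2::real)^(2^k) * 2 ^ (2^k - 1) = 2 ^ (2^Suc k - 1)" .
    have 2: "(x^2) ^ (2^k) = x ^ (2^Suc k)" for x :: real
      by (simp add: power_mult[symmetric] mult.commute)
    show ?thesis by (simp only: 1 2 mult.assoc[symmetric])
  qed
  finally show ?case .
qed


lemma Qb:
  fixes p s lam :: real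
  assumes p: "p \<ge> 1" and s: "s \<ge> 0" and l: "lam \<ge> 0"
  shows "sqrt p * (lam * s) \<le> (max (sqrt (2*p) * s) (2*p*lam))^2 / (2*p)"
    and "p * (2 * lam^2) \<le> (max (sqrt (2*p) * s) (2*p*lam))^2 / (2*p)"
    and "s^2 \<le> (max (sqrt (2*p) * s) (2*p*lam))^2 / (2*p)"
proof -
  let ?Q = "max (sqrt (2*p) * s) (2*p*lam)"
  have q1: "sqrt (2*p) * s \<le> ?Q" and q2: "2*p*lam \<le> ?Q" by auto
  have n1: "0 \<le> sqrt (2*p) * s" using p s by simp
  have n2: "0 \<le> 2*p*lam" using p l by simp
  have pp: "2*p > 0" using p by simp
  have "sqrt p * (lam * s) * (2*p) \<le> sqrt (2*p) * s * (2*p*lam)"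
  proof -
    have "sqrt p \<le> sqrt (2*p)" using p by simp
    then have "sqrt p * (s * (2*p*lam)) \<le> sqrt (2*p) * (s * (2*p*lam))"
      using p s l by (intro mult_right_mono) auto
    then show ?thesis by (simp add: algebra_simps)
  qed
  also have "\<dots> \<le> ?Q * ?Q" using q1 q2 n1 n2 by (intro mult_mono) auto
  finally show "sqrt p * (lam * s) \<le> ?Q^2 / (2*p)" using pp by (simp add: field_simps power2_eq_square)
  have "(2*p*lam)^2 \<le> ?Q^2" using q2 n2 by (intro power_mono) auto
  then show "p * (2 * lam^2) \<le> ?Q^2 / (2*p)" using pp by (simp add: field_simps power2_eq_square)
  have "(sqrt (2*p) * s)^2 \<le> ?Q^2" using q1 n1 by (intro power_mono) auto
  then show "s^2 \<le> ?Q^2 / (2*p)" using pp p by (simp add: field_simps power_mult_distrib)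
qed

lemma fin_arith:
  fixes N Q X R :: real and p :: nat
  assumes p: "p \<ge> 1" and N: "N \<ge> 0" and Q: "Q \<ge> 0" and R: "R = Q^2 / (2 * real p)"
    and X: "X \<le> (16 * real p)^p * (2^(p-1) * (N * R^p + N * 16^p * R^p))"
  shows "X \<le> N * 16^(2*p) * Q^(2*p)"
proof -
  have "(16 * real p) * R = 8 * Q^2" using p R by (simp add: field_simps)
  have e: "(16 * real p)^p * R^p = 8^p * Q^(2*p)"
  proof -
    have "(16 * real p)^p * R^p = ((16 * real p) * R)^p" by (rule power_mult_distrib[symmetric])
    also have "\<dots> = (8 * Q^2)^p" by (simp only: \<open>(16 * real p) * R = 8 * Q^2\<close>)
    also have "\<dots> = 8^p * (Q^2)^p" by (rule power_mult_distrib)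
    also have "(Q^2)^p = Q^(2*p)" by (rule power_mult[symmetric])
    finally show ?thesis .
  qed
  have "X \<le> (2^(p-1) * (1 + 16^p)) * N * ((16 * real p)^p * R^p)"
    using X by (simp add: algebra_simps)
  also have "\<dots> = (2^(p-1) * (1 + 16^p)) * N * (8^p * Q^(2*p))" by (simp only: e)
  also have "\<dots> \<le> (2^(p-1) * (2 * 16^p)) * N * (8^p * Q^(2*p))"
    using N Q by (intro mult_right_mono mult_left_mono) auto
  also have "(2::real)^(p-1) * (2 * 16^p) = 2^p * 16^p"
  proof -
    obtain q where q: "p = Suc q" using p by (cases p) auto
    show ?thesis by (simp add: q)
  qed
  also have "2^p * 16^p * N * (8^p * Q^(2*p)) = N * ((2*16)*8)^p * Q^(2*p)"
    by (simp only: power_mult_distrib) (simp add: algebra_simps)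
  also have "(2*16*8::real)^p = 16^(2*p)" by (simp add: power_mult[of "16::real" 2 p])
  finally show ?thesis .
qed


definition wv :: "nat \<Rightarrow> (nat \<Rightarrow> nat \<Rightarrow> real) \<Rightarrow> (nat \<Rightarrow> real) \<Rightarrow> nat \<Rightarrow> real" where
  "wv n A z i = (\<Sum>j<n. A i j * z j)"

definition chaos :: "nat \<Rightarrow> (nat \<Rightarrow> nat \<Rightarrow> real) \<Rightarrow> (nat \<Rightarrow> real) \<Rightarrow> real" where
  "chaos n A z = (\<Sum>i<n. z i * wv n A z i)"

definition zd :: "nat \<Rightarrow> (nat \<Rightarrow> nat \<Rightarrow> real) \<Rightarrow> bool" where
  "zd n A \<longleftrightarrow> (\<forall>i<n. A i i = 0) \<and> (\<forall>i<n. \<forall>j<n. A i j = A j i)"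

lemma sum_upd:
  fixes g u :: "nat \<Rightarrow> real"
  assumes "i < n"
  shows "(\<Sum>j<n. g j * (u(i:=c)) j) = (\<Sum>j<n. g j * u j) + g i * (c - u i)"
proof -
  have "(\<Sum>j<n. g j * (u(i:=c)) j) = g i * c + (\<Sum>j\<in>{..<n}-{i}. g j * (u(i:=c)) j)"
    using assms by (subst sum.remove[of _ i]) auto
  also have "(\<Sum>j\<in>{..<n}-{i}. g j * (u(i:=c)) j) = (\<Sum>j\<in>{..<n}-{i}. g j * u j)"
    by (intro sum.cong) auto
  also have "(\<Sum>j<n. g j * u j) = g i * u i + (\<Sum>j\<in>{..<n}-{i}. g j * u j)"
    using assms by (subst sum.remove[of _ i]) auto
  ultimately show ?thesis by (simp add: algebra_simps)
qed

lemma wv_upd_same: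
  assumes "zd n A" "i < n"
  shows "wv n A (z(i:=c)) i = wv n A z i"
  using sum_upd[OF assms(2), of "A i" z c] assms unfolding wv_def zd_def by simp

lemma wv_upd:
  assumes "i < n"
  shows "wv n A (z(i:=c)) j = wv n A z j + A j i * (c - z i)"
  using sum_upd[OF assms(1), of "A j" z c] unfolding wv_def by simp

lemma chaos_upd:
  assumes "zd n A" "i < n"
  shows "chaos n A (z(i:=c)) = chaos n A (z(i:=0)) + 2 * c * wv n A z i"
proof -
  let ?u = "z(i:=0)"
  have zu: "z(i:=c) = ?u(i:=c)" by simp
  have "chaos n A (?u(i:=c)) = (\<Sum>j<n. (?u(i:=c)) j * (wv n A ?u j + A j i * c))"
    unfolding chaos_def using wv_upd[OF assms(2), of A ?u c] by simp
  also have "\<dots> = (\<Sum>j<n. (?u(i:=c)) j * wv n A ?u j) + c * (\<Sum>j<n. A j i * (?u(i:=c)) j)"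
    by (simp add: algebra_simps sum.distrib sum_distrib_left)
  also have "(\<Sum>j<n. (?u(i:=c)) j * wv n A ?u j) = chaos n A ?u + c * wv n A ?u i"
    using sum_upd[OF assms(2), of "wv n A ?u" ?u c] unfolding chaos_def by (simp add: mult.commute)
  also have "(\<Sum>j<n. A j i * (?u(i:=c)) j) = wv n A ?u i"
    using sum_upd[OF assms(2), of "\<lambda>j. A j i" ?u c] assms unfolding wv_def zd_def by simp
  finally have h: "chaos n A (?u(i:=c)) = chaos n A ?u + c * wv n A ?u i + c * wv n A ?u i" .
  show ?thesis using h wv_upd_same[OF assms, of z 0] by simp
qed

lemma stein_i:
  assumes "zd n A" "i < n"
  shows "(\<Sum>z\<in>hypercube n. z i * wv n A z i * chaos n A z ^ (2*m+1))
     \<le> 4 * (2 * real m + 1) * (\<Sum>z\<in>hypercube n. wv n A z i ^ 2 * chaos n A z ^ (2*m))"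
proof -
  let ?F = "\<lambda>z. z i * wv n A z i * chaos n A z ^ (2*m+1)"
  let ?G = "\<lambda>z. 4 * (2 * real m + 1) * (wv n A z i ^ 2 * chaos n A z ^ (2*m))"
  have "(\<Sum>z\<in>hypercube n. ?F z) = (\<Sum>z\<in>hypercube n. (?F (z(i:=1)) + ?F (z(i:=-1))) / 2)"
    by (rule avg[OF assms(2)])
  also have "\<dots> \<le> (\<Sum>z\<in>hypercube n. (?G (z(i:=1)) + ?G (z(i:=-1))) / 2)"
  proof (rule sum_mono)
    fix z :: "nat \<Rightarrow> real"
    let ?w = "wv n A z i" and ?R = "chaos n A (z(i:=0))"
    have e1: "chaos n A (z(i:=1)) = ?R + 2 * ?w" and e2: "chaos n A (z(i:=-1)) = ?R - 2 * ?w"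
      using chaos_upd[OF assms, of z 1] chaos_upd[OF assms, of z "-1"] by simp_all
    have w1: "wv n A (z(i:=c)) i = ?w" for c using wv_upd_same[OF assms] .
    have f1: "?F (z(i:=1)) = ?w * (?R + 2*?w) ^ (2*m+1)"
      by (simp only: e1 w1) simp
    have f2: "?F (z(i:=-1)) = - (?w * (?R - 2*?w) ^ (2*m+1))"
      by (simp only: e2 w1) simp
    have "(?F (z(i:=1)) + ?F (z(i:=-1))) / 2 = ?w * ((?R + 2*?w) ^ (2*m+1) - (?R - 2*?w) ^ (2*m+1)) / 2"
      by (simp only: f1 f2 right_diff_distrib) simp
    also have "\<dots> \<le> (4 * (2 * real m + 1) * ?w^2 * (?R + 2*?w) ^ (2*m) + 4 * (2 * real m + 1) * ?w^2 * (?R - 2*?w) ^ (2*m)) / 2"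
      by (rule stein_real)
    also have "\<dots> = (?G (z(i:=1)) + ?G (z(i:=-1))) / 2"
      by (simp only: e1 e2 w1) (simp add: mult.assoc)
    finally show "(?F (z(i:=1)) + ?F (z(i:=-1))) / 2 \<le> (?G (z(i:=1)) + ?G (z(i:=-1))) / 2" .
  qed
  also have "\<dots> = (\<Sum>z\<in>hypercube n. ?G z)"
    by (rule avg[OF assms(2), symmetric])
  also have "\<dots> = 4 * (2 * real m + 1) * (\<Sum>z\<in>hypercube n. wv n A z i ^ 2 * chaos n A z ^ (2*m))"
    by (simp add: sum_distrib_left)
  finally show ?thesis .
qed

lemma stein:
  assumes "zd n A"
  shows "(\<Sum>z\<in>hypercube n. chaos n A z ^ (2*m+2))
     \<le> 4 * (2 * real m + 1) * (\<Sum>z\<in>hypercube n. (\<Sum>i<n. wv n A z i ^ 2) * chaos n A z ^ (2*m))"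
proof -
  have "(\<Sum>z\<in>hypercube n. chaos n A z ^ (2*m+2))
      = (\<Sum>z\<in>hypercube n. \<Sum>i<n. z i * wv n A z i * chaos n A z ^ (2*m+1))"
  proof (rule sum.cong[OF refl])
    fix z
    have "chaos n A z ^ (2*m+2) = chaos n A z * chaos n A z ^ (2*m+1)" by simp
    also have "\<dots> = (\<Sum>i<n. z i * wv n A z i * chaos n A z ^ (2*m+1))"
      by (subst (1) chaos_def) (simp add: sum_distrib_right)
    finally show "chaos n A z ^ (2*m+2) = (\<Sum>i<n. z i * wv n A z i * chaos n A z ^ (2*m+1))" .
  qed
  also have "\<dots> = (\<Sum>i<n. \<Sum>z\<in>hypercube n. z i * wv n A z i * chaos n A z ^ (2*m+1))"
    by (rule sum.swap)
  also have "\<dots> \<le> (\<Sum>i<n. 4 * (2 * real m + 1) * (\<Sum>z\<in>hypercube n. wv n A z i ^ 2 * chaos n A z ^ (2*m)))"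
    by (rule sum_mono, rule stein_i[OF assms]) auto
  also have "\<dots> = 4 * (2 * real m + 1) * (\<Sum>i<n. \<Sum>z\<in>hypercube n. wv n A z i ^ 2 * chaos n A z ^ (2*m))"
    by (simp only: sum_distrib_left)
  also have "(\<Sum>i<n. \<Sum>z\<in>hypercube n. wv n A z i ^ 2 * chaos n A z ^ (2*m)) = (\<Sum>z\<in>hypercube n. \<Sum>i<n. wv n A z i ^ 2 * chaos n A z ^ (2*m))"
    by (rule sum.swap)
  also have "\<dots> = (\<Sum>z\<in>hypercube n. (\<Sum>i<n. wv n A z i ^ 2) * chaos n A z ^ (2*m))"
    by (simp only: sum_distrib_right)
  finally show ?thesis .
qed



definition fr :: "nat \<Rightarrow> (nat \<Rightarrow> nat \<Rightarrow> real) \<Rightarrow> real" where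
  "fr n A = (\<Sum>i<n. \<Sum>j<n. (A i j)^2)"

definition msq :: "nat \<Rightarrow> (nat \<Rightarrow> nat \<Rightarrow> real) \<Rightarrow> nat \<Rightarrow> nat \<Rightarrow> real" where
  "msq n A j k = (if j = k then 0 else (\<Sum>i<n. A i j * A i k))"

definition opb :: "nat \<Rightarrow> (nat \<Rightarrow> nat \<Rightarrow> real) \<Rightarrow> real \<Rightarrow> bool" where
  "opb n A lam \<longleftrightarrow> (\<forall>x. vec_norm2 n (mat_vec n A x) \<le> lam * vec_norm2 n x)"

lemma fr_nonneg: "fr n A \<ge> 0"
  unfolding fr_def by (intro sum_nonneg) auto

lemma chaos_alt: "chaos n A z = (\<Sum>j<n. \<Sum>k<n. A j k * z j * z k)"
  unfolding chaos_def wv_def by (simp add: sum_distrib_left algebra_simps)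

lemma chaos_sum_zero:
  assumes "zd n A"
  shows "(\<Sum>z\<in>hypercube n. chaos n A z) = 0"
proof -
  have "(\<Sum>z\<in>hypercube n. chaos n A z) = (\<Sum>i<n. \<Sum>z\<in>hypercube n. z i * wv n A z i)"
    unfolding chaos_def by (rule sum.swap)
  also have "\<dots> = 0"
  proof (rule sum.neutral, rule ballI)
    fix i assume i: "i \<in> {..<n}"
    then have i': "i < n" by simp
    have "(\<Sum>z\<in>hypercube n. z i * wv n A z i) =
      (\<Sum>z\<in>hypercube n. ((z(i:=1)) i * wv n A (z(i:=1)) i + (z(i:=-1)) i * wv n A (z(i:=-1)) i) / 2)"
      by (rule avg[OF i'])
    also have "\<dots> = 0"
      by (rule sum.neutral) (simp add: wv_upd_same[OF assms i'])
    finally show "(\<Sum>z\<in>hypercube n. z i * wv n A z i) = 0" .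
  qed
  finally show ?thesis .
qed

lemma absorb:
  fixes a S2 Km S1 :: real
  assumes "a > 0" "S2 \<le> a * (Km * S1 + S2 / (2 * a))"
  shows "S2 \<le> 2 * a * Km * S1"
proof -
  have "a * (Km * S1 + S2 / (2 * a)) = a * Km * S1 + S2 / 2" using assms(1) by (simp add: field_simps)
  then show ?thesis using assms(2) by simp
qed

lemma khin:
  assumes "zd n A" "p \<ge> 1"
  shows "(\<Sum>z\<in>hypercube n. chaos n A z ^ (2*p))
     \<le> (16 * real p) ^ p * (\<Sum>z\<in>hypercube n. (\<Sum>i<n. wv n A z i ^ 2) ^ p)"
proof -
  obtain m where pm: "p = m + 1" using assms(2) by (metis add.commute le_Suc_ex)
  define K :: real where "K = 8 * (2 * real m + 1)"
  have Kpos: "K > 0" unfolding K_def by simp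
  let ?s = "\<lambda>z. \<Sum>i<n. wv n A z i ^ 2"
  let ?S2 = "\<Sum>z\<in>hypercube n. chaos n A z ^ (2*m+2)"
  let ?S1 = "\<Sum>z\<in>hypercube n. ?s z ^ (m+1)"
  have "?S2 \<le> 4 * (2 * real m + 1) * (\<Sum>z\<in>hypercube n. ?s z * chaos n A z ^ (2*m))"
    by (rule stein[OF assms(1)])
  also have "(\<Sum>z\<in>hypercube n. ?s z * chaos n A z ^ (2*m))
     \<le> (\<Sum>z\<in>hypercube n. K ^ m * ?s z ^ (m+1) + chaos n A z ^ (2*m+2) / K)"
  proof (rule sum_mono)
    fix z
    have eq: "(c^2)^(m+1) = c^(2*m+2)" for c :: real
      by (subst power_mult[symmetric]) simp
    have "?s z * (chaos n A z ^ 2) ^ m \<le> K ^ m * ?s z ^ (m+1) + (chaos n A z ^ 2) ^ (m+1) / K"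
      by (rule ktrick) (auto intro: sum_nonneg simp: Kpos)
    then show "?s z * chaos n A z ^ (2*m) \<le> K ^ m * ?s z ^ (m+1) + chaos n A z ^ (2*m+2) / K"
      by (simp only: eq power_mult)
  qed
  also have "\<dots> = K ^ m * ?S1 + ?S2 / K"
    by (simp only: sum.distrib sum_distrib_left sum_divide_distrib)
  finally have "?S2 \<le> 4 * (2 * real m + 1) * (K ^ m * ?S1 + ?S2 / K)"
    by (simp add: mult_left_mono)
  then have h: "?S2 \<le> K ^ (m+1) * ?S1"
    using absorb[of "4 * (2 * real m + 1)" ?S2 "K ^ m" ?S1] unfolding K_def by (simp add: mult.assoc)
  have S1: "?S1 \<ge> 0" by (rule sum_nonneg, rule zero_le_power) (simp add: sum_nonneg)
  have "K ^ (m+1) \<le> (16 * real p) ^ p"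
    unfolding pm K_def by (intro power_mono) auto
  then have "K ^ (m+1) * ?S1 \<le> (16 * real p) ^ p * ?S1" using S1 by (rule mult_right_mono)
  with h show ?thesis by (simp add: pm)
qed



lemma vn_sq: "vec_norm2 n x ^ 2 = (\<Sum>i<n. x i ^ 2)"
  unfolding vec_norm2_def by (simp add: sum_nonneg)

lemma vn_nonneg: "vec_norm2 n x \<ge> 0"
  unfolding vec_norm2_def by (simp add: sum_nonneg)

lemma vn_cong: "(\<And>j. j < n \<Longrightarrow> x j = y j) \<Longrightarrow> vec_norm2 n x = vec_norm2 n y"
  unfolding vec_norm2_def by (intro arg_cong[where f=sqrt] sum.cong) auto

lemma vn_tri: "vec_norm2 n (\<lambda>j. x j + y j) \<le> vec_norm2 n x + vec_norm2 n y"
  using L2_set_triangle_ineq[of x y "{..<n}"] unfolding vec_norm2_def L2_set_def by simp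

lemma vn_diag:
  assumes "\<mu> \<ge> 0" "\<And>j. j < n \<Longrightarrow> \<bar>d j\<bar> \<le> \<mu>"
  shows "vec_norm2 n (\<lambda>j. d j * x j) \<le> \<mu> * vec_norm2 n x"
proof -
  have "(\<Sum>j<n. (d j * x j)^2) \<le> (\<Sum>j<n. \<mu>^2 * x j ^ 2)"
  proof (rule sum_mono)
    fix j assume "j \<in> {..<n}"
    then have "(d j)^2 \<le> \<mu>^2" using assms by (simp add: abs_le_square_iff[symmetric])
    then show "(d j * x j)^2 \<le> \<mu>^2 * x j ^ 2" by (simp add: power_mult_distrib mult_right_mono)
  qed
  then have "sqrt (\<Sum>j<n. (d j * x j)^2) \<le> sqrt (\<mu>^2 * (\<Sum>j<n. x j ^ 2))"
    by (simp add: sum_distrib_left)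
  also have "\<dots> = \<mu> * sqrt (\<Sum>j<n. x j ^ 2)" using assms(1) by (simp add: real_sqrt_mult)
  finally show ?thesis unfolding vec_norm2_def .
qed

lemma opb_sq:
  assumes "opb n A lam" "lam \<ge> 0"
  shows "(\<Sum>j<n. mat_vec n A x j ^ 2) \<le> lam^2 * (\<Sum>j<n. x j ^ 2)"
proof -
  have "vec_norm2 n (mat_vec n A x) \<le> lam * vec_norm2 n x" using assms unfolding opb_def by blast
  then have "vec_norm2 n (mat_vec n A x) ^ 2 \<le> (lam * vec_norm2 n x) ^ 2"
    by (intro power_mono) (auto simp: vn_nonneg)
  then show ?thesis by (simp add: vn_sq power_mult_distrib)
qed

lemma col_bound:
  assumes "opb n A lam" "lam \<ge> 0" "j < n"
  shows "(\<Sum>i<n. A i j ^ 2) \<le> lam^2"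
proof -
  let ?e = "\<lambda>k. if k = j then 1 else (0::real)"
  have "mat_vec n A ?e i = A i j" for i
    unfolding mat_vec_def using assms(3) by (simp add: if_distrib cong: if_cong)
  moreover have "(\<Sum>k<n. ?e k ^ 2) = (\<Sum>k<n. if k = j then 1 else 0)" by (intro sum.cong) auto
  then have "(\<Sum>k<n. ?e k ^ 2) = 1" using assms(3) by simp
  ultimately show ?thesis using opb_sq[OF assms(1,2), of ?e] by simp
qed

lemma zd_msq: "zd n (msq n A)"
  unfolding zd_def msq_def by (auto simp: mult.commute)

lemma sigma_exp:
  assumes "z \<in> hypercube n"
  shows "(\<Sum>i<n. wv n A z i ^ 2) = fr n A + chaos n (msq n A) z"
proof -
  let ?T = "\<lambda>j k. \<Sum>i<n. A i j * A i k"
  have "(\<Sum>i<n. wv n A z i ^ 2) = (\<Sum>i<n. \<Sum>j<n. \<Sum>k<n. A i j * A i k * z j * z k)"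
    unfolding wv_def power2_eq_square sum_product by (simp add: algebra_simps)
  also have "\<dots> = (\<Sum>j<n. \<Sum>i<n. \<Sum>k<n. A i j * A i k * z j * z k)"
    by (rule sum.swap)
  also have "\<dots> = (\<Sum>j<n. \<Sum>k<n. \<Sum>i<n. A i j * A i k * z j * z k)"
    by (intro sum.cong refl sum.swap)
  also have "\<dots> = (\<Sum>j<n. \<Sum>k<n. ?T j k * z j * z k)"
    by (simp add: sum_distrib_right)
  also have "\<dots> = (\<Sum>j<n. \<Sum>k<n. msq n A j k * z j * z k + (if j = k then ?T j j else 0))"
  proof (intro sum.cong refl)
    fix j k assume "j \<in> {..<n}" "k \<in> {..<n}"
    then have "z j * z j = 1" using hyp_sq assms by auto
    then show "?T j k * z j * z k = msq n A j k * z j * z k + (if j = k then ?T j j else 0)"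
      unfolding msq_def by (auto simp: mult.assoc)
  qed
  also have "\<dots> = chaos n (msq n A) z + (\<Sum>j<n. ?T j j)"
    by (simp add: sum.distrib chaos_alt)
  also have "(\<Sum>j<n. ?T j j) = fr n A"
    unfolding fr_def power2_eq_square by (rule sum.swap)
  finally show ?thesis by simp
qed

lemma fr_msq:
  assumes "zd n A" "opb n A lam" "lam \<ge> 0"
  shows "fr n (msq n A) \<le> lam^2 * fr n A"
proof -
  let ?T = "\<lambda>j k. \<Sum>i<n. A i j * A i k"
  have "fr n (msq n A) \<le> (\<Sum>j<n. \<Sum>k<n. (?T j k)^2)"
    unfolding fr_def msq_def by (intro sum_mono) auto
  also have "\<dots> = (\<Sum>k<n. \<Sum>j<n. (?T j k)^2)" by (rule sum.swap)
  also have "\<dots> \<le> (\<Sum>k<n. lam^2 * (\<Sum>i<n. A i k ^ 2))"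
  proof (rule sum_mono)
    fix k assume k: "k \<in> {..<n}"
    have "(\<Sum>j<n. (?T j k)^2) = (\<Sum>j<n. mat_vec n A (\<lambda>i. A i k) j ^ 2)"
    proof (intro sum.cong refl)
      fix j assume "j \<in> {..<n}"
      then show "(?T j k)^2 = mat_vec n A (\<lambda>i. A i k) j ^ 2"
        unfolding mat_vec_def using assms(1) unfolding zd_def by (auto intro!: sum.cong)
    qed
    also have "\<dots> \<le> lam^2 * (\<Sum>i<n. A i k ^ 2)" by (rule opb_sq[OF assms(2,3)])
    finally show "(\<Sum>j<n. (?T j k)^2) \<le> lam^2 * (\<Sum>i<n. A i k ^ 2)" .
  qed
  also have "\<dots> = lam^2 * fr n A"
    unfolding fr_def by (simp add: sum_distrib_left sum.swap[of "\<lambda>i k. A i k ^ 2"])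
  finally show ?thesis .
qed

lemma opb_msq:
  assumes "zd n A" "opb n A lam" "lam \<ge> 0"
  shows "opb n (msq n A) (2 * lam^2)"
  unfolding opb_def
proof
  fix x
  let ?T = "\<lambda>j k. \<Sum>i<n. A i j * A i k"
  let ?f = "mat_vec n A (mat_vec n A x)"
  let ?g = "\<lambda>j. - ?T j j * x j"
  have eq: "mat_vec n (msq n A) x j = ?f j + ?g j" if j: "j < n" for j
  proof -
    have "?f j = (\<Sum>k<n. ?T j k * x k)"
    proof -
      have "?f j = (\<Sum>i<n. \<Sum>k<n. A j i * A i k * x k)"
        unfolding mat_vec_def by (simp add: sum_distrib_left mult.assoc)
      also have "\<dots> = (\<Sum>k<n. \<Sum>i<n. A j i * A i k * x k)" by (rule sum.swap)
      also have "\<dots> = (\<Sum>k<n. ?T j k * x k)"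
        using assms(1) j unfolding zd_def by (auto simp: sum_distrib_right intro!: sum.cong)
      finally show ?thesis .
    qed
    moreover have "mat_vec n (msq n A) x j = (\<Sum>k<n. ?T j k * x k) - ?T j j * x j"
    proof -
      have "mat_vec n (msq n A) x j = (\<Sum>k<n. ?T j k * x k - (if k = j then ?T j j * x j else 0))"
        unfolding mat_vec_def msq_def by (intro sum.cong) auto
      also have "\<dots> = (\<Sum>k<n. ?T j k * x k) - ?T j j * x j"
        using j by (simp add: sum_subtractf)
      finally show ?thesis .
    qed
    ultimately show ?thesis by simp
  qed
  have "vec_norm2 n (mat_vec n (msq n A) x) = vec_norm2 n (\<lambda>j. ?f j + ?g j)"
    by (rule vn_cong) (rule eq)
  also have "\<dots> \<le> vec_norm2 n ?f + vec_norm2 n ?g" by (rule vn_tri)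
  also have "vec_norm2 n ?f \<le> lam * vec_norm2 n (mat_vec n A x)" using assms(2) unfolding opb_def by blast
  also have "\<dots> \<le> lam * (lam * vec_norm2 n x)"
    using assms(2,3) unfolding opb_def by (intro mult_left_mono) auto
  also have "vec_norm2 n ?g \<le> lam^2 * vec_norm2 n x"
  proof (rule vn_diag)
    fix j assume "j < n"
    have "?T j j \<ge> 0" by (intro sum_nonneg) auto
    moreover have "?T j j \<le> lam^2" using col_bound[OF assms(2,3) \<open>j<n\<close>] by (simp add: power2_eq_square)
    ultimately show "\<bar>- ?T j j\<bar> \<le> lam^2" by simp
  qed simp
  finally show "vec_norm2 n (mat_vec n (msq n A) x) \<le> 2 * lam\<^sup>2 * vec_norm2 n x"
    by (simp add: power2_eq_square algebra_simps)
qed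



lemma hw:
  assumes "zd n A" "lam \<ge> 0" "opb n A lam"
  shows "(\<Sum>z\<in>hypercube n. chaos n A z ^ (2^k))
    \<le> real (card (hypercube n)) * 16^(2^k) * (max (sqrt (2^k) * sqrt (fr n A)) (2^k * lam))^(2^k)"
  using assms
proof (induction k arbitrary: A lam)
  case 0
  have "0 \<le> max (sqrt (2^0) * sqrt (fr n A)) (2^0 * lam)" using "0.prems"(2) by (simp add: max_def fr_nonneg)
  then show ?case using chaos_sum_zero[OF "0.prems"(1)] by simp
next
  case (Suc k)
  define p :: nat where "p = 2^k"
  have p1: "p \<ge> 1" unfolding p_def by simp
  have rp: "real p = 2^k" unfolding p_def by simp
  define N where "N = real (card (hypercube n))"
  have N: "N \<ge> 0" unfolding N_def by simp
  define s where "s = sqrt (fr n A)"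
  have s: "s \<ge> 0" unfolding s_def by (simp add: fr_nonneg)
  define Q where "Q = max (sqrt (2 * real p) * s) (2 * real p * lam)"
  have Q: "Q \<ge> 0" unfolding Q_def using s by (simp add: le_max_iff_disj)
  define R where "R = Q^2 / (2 * real p)"
  let ?M = "msq n A"
  have zM: "zd n ?M" by (rule zd_msq)
  have oM: "opb n ?M (2 * lam^2)" by (rule opb_msq[OF Suc.prems(1,3,2)])
  have lM: "2 * lam^2 \<ge> 0" by simp
  have IH: "(\<Sum>z\<in>hypercube n. chaos n ?M z ^ p) \<le> N * 16^p * (max (sqrt (real p) * sqrt (fr n ?M)) (real p * (2 * lam^2)))^p"
    using Suc.IH[OF zM lM oM] unfolding p_def N_def by simp
  have frM: "sqrt (fr n ?M) \<le> lam * s"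
  proof -
    have "sqrt (fr n ?M) \<le> sqrt (lam^2 * fr n A)"
      using fr_msq[OF Suc.prems(1,3,2)] by simp
    also have "\<dots> = lam * s" unfolding s_def using Suc.prems(2) by (simp add: real_sqrt_mult)
    finally show ?thesis .
  qed
  have qb1: "sqrt (real p) * (lam * s) \<le> R" and qb2: "real p * (2 * lam^2) \<le> R" and qb3: "s^2 \<le> R"
    using Qb[of "real p" s lam] p1 s Suc.prems(2) unfolding R_def Q_def by auto
  have maxM: "max (sqrt (real p) * sqrt (fr n ?M)) (real p * (2 * lam^2)) \<le> R"
  proof -
    have "sqrt (real p) * sqrt (fr n ?M) \<le> sqrt (real p) * (lam * s)"
      using frM by (intro mult_left_mono) auto
    then show ?thesis using qb1 qb2 by simp
  qed
  have IH2: "(\<Sum>z\<in>hypercube n. chaos n ?M z ^ p) \<le> N * 16^p * R^p"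
  proof -
    have "(max (sqrt (real p) * sqrt (fr n ?M)) (real p * (2 * lam^2)))^p \<le> R^p"
      by (intro power_mono maxM) (auto simp: max_def fr_nonneg)
    then show ?thesis using IH N by (smt (verit) mult_left_mono zero_le_numeral zero_le_power mult_nonneg_nonneg)
  qed
  have frA: "fr n A ^ p \<le> R^p"
  proof -
    have "fr n A = s^2" unfolding s_def by (simp add: fr_nonneg)
    then show ?thesis using qb3 by (intro power_mono) (auto simp: fr_nonneg)
  qed
  have "(\<Sum>z\<in>hypercube n. chaos n A z ^ (2*p))
     \<le> (16 * real p) ^ p * (\<Sum>z\<in>hypercube n. (\<Sum>i<n. wv n A z i ^ 2) ^ p)"
    by (rule khin[OF Suc.prems(1) p1])
  also have "(\<Sum>z\<in>hypercube n. (\<Sum>i<n. wv n A z i ^ 2) ^ p)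
     = (\<Sum>z\<in>hypercube n. (fr n A + chaos n ?M z) ^ p)"
    by (intro sum.cong refl) (simp add: sigma_exp)
  also have "\<dots> \<le> (\<Sum>z\<in>hypercube n. 2^(p-1) * (fr n A ^ p + chaos n ?M z ^ p))"
    unfolding p_def by (intro sum_mono pow2_convex)
  also have "\<dots> = 2^(p-1) * (N * fr n A ^ p + (\<Sum>z\<in>hypercube n. chaos n ?M z ^ p))"
    unfolding N_def by (simp only: sum_distrib_left[symmetric] sum.distrib) simp
  also have "\<dots> \<le> 2^(p-1) * (N * R^p + N * 16^p * R^p)"
    using frA IH2 N by (intro mult_left_mono add_mono mult_left_mono) auto
  finally have X: "(\<Sum>z\<in>hypercube n. chaos n A z ^ (2*p)) \<le> (16 * real p) ^ p * (2^(p-1) * (N * R^p + N * 16^p * R^p))"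
    by (simp add: mult_left_mono)
  have "(\<Sum>z\<in>hypercube n. chaos n A z ^ (2*p)) \<le> N * 16^(2*p) * Q^(2*p)"
    by (rule fin_arith[OF p1 N Q R_def X])
  moreover have "2^Suc k = 2 * p" unfolding p_def by simp
  moreover have "(2::real)^Suc k = 2 * real p" using rp by simp
  ultimately show ?case unfolding N_def Q_def s_def using rp by simp
qed



lemma cs_bound: "vec_norm2 n (mat_vec n B x) \<le> mat_frob n B * vec_norm2 n x"
proof -
  have "(\<Sum>i<n. mat_vec n B x i ^ 2) \<le> (\<Sum>i<n. (\<Sum>j<n. B i j ^ 2) * (\<Sum>j<n. x j ^ 2))"
    unfolding mat_vec_def by (intro sum_mono Cauchy_Schwarz_ineq_sum)
  also have "\<dots> = (\<Sum>i<n. \<Sum>j<n. B i j ^ 2) * (\<Sum>j<n. x j ^ 2)" by (simp add: sum_distrib_right)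
  finally have "sqrt (\<Sum>i<n. mat_vec n B x i ^ 2) \<le> sqrt ((\<Sum>i<n. \<Sum>j<n. B i j ^ 2) * (\<Sum>j<n. x j ^ 2))"
    by simp
  then show ?thesis unfolding vec_norm2_def mat_frob_def by (simp add: real_sqrt_mult)
qed

lemma bdd_S: "bdd_above {vec_norm2 n (mat_vec n B x) | x. vec_norm2 n x = 1}"
proof (rule bdd_aboveI[where M="mat_frob n B"])
  fix v assume "v \<in> {vec_norm2 n (mat_vec n B x) | x. vec_norm2 n x = 1}"
  then obtain x where v: "v = vec_norm2 n (mat_vec n B x)" and x: "vec_norm2 n x = 1" by blast
  show "v \<le> mat_frob n B" using cs_bound[of n B x] v x by simp
qed

lemma op_upper: "vec_norm2 n x = 1 \<Longrightarrow> vec_norm2 n (mat_vec n B x) \<le> mat_opnorm n B"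
  unfolding mat_opnorm_def by (rule cSup_upper[OF _ bdd_S]) auto

lemma vn_scale: "vec_norm2 n (\<lambda>i. x i / r) = vec_norm2 n x / \<bar>r\<bar>"
proof -
  have "(\<Sum>i<n. (x i / r)^2) = (\<Sum>i<n. x i ^ 2) / r^2"
    by (simp add: power_divide sum_divide_distrib)
  then show ?thesis unfolding vec_norm2_def by (simp add: real_sqrt_divide)
qed

lemma opb_opnorm: "opb n B (mat_opnorm n B)"
  unfolding opb_def
proof
  fix x
  let ?r = "vec_norm2 n x"
  show "vec_norm2 n (mat_vec n B x) \<le> mat_opnorm n B * ?r"
  proof (cases "?r = 0")
    case True
    then have "(\<Sum>i<n. x i ^ 2) = 0" unfolding vec_norm2_def by (simp add: sum_nonneg)
    then have x0: "\<forall>i\<in>{..<n}. x i ^ 2 = 0" by (subst sum_nonneg_eq_0_iff[symmetric]) auto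
    have "mat_vec n B x j = 0" for j unfolding mat_vec_def using x0 by simp
    then have "vec_norm2 n (mat_vec n B x) = 0" unfolding vec_norm2_def by simp
    then show ?thesis using True by simp
  next
    case False
    then have rpos: "?r > 0" using vn_nonneg[of n x] by simp
    let ?y = "\<lambda>i. x i / ?r"
    have "vec_norm2 n ?y = 1" using rpos by (simp add: vn_scale)
    then have "vec_norm2 n (mat_vec n B ?y) \<le> mat_opnorm n B" by (rule op_upper)
    moreover have "mat_vec n B ?y = (\<lambda>j. mat_vec n B x j / ?r)"
      unfolding mat_vec_def by (simp add: sum_divide_distrib)
    ultimately have "vec_norm2 n (mat_vec n B x) / ?r \<le> mat_opnorm n B"
      using rpos by (simp add: vn_scale)
    then show ?thesis using rpos by (simp add: field_simps)
  qed
qed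

lemma diag_le_op:
  assumes "i < n"
  shows "\<bar>B i i\<bar> \<le> mat_opnorm n B"
proof -
  let ?e = "\<lambda>k. if k = i then 1 else (0::real)"
  have me: "mat_vec n B ?e j = B j i" for j
    unfolding mat_vec_def using assms by (simp add: if_distrib cong: if_cong)
  have "(\<Sum>k<n. ?e k ^ 2) = (\<Sum>k<n. if k = i then 1 else 0)" by (intro sum.cong) auto
  then have "vec_norm2 n ?e = 1" using assms unfolding vec_norm2_def by simp
  then have "vec_norm2 n (mat_vec n B ?e) \<le> mat_opnorm n B" by (rule op_upper)
  moreover have "\<bar>B i i\<bar> \<le> vec_norm2 n (mat_vec n B ?e)"
  proof -
    have "B i i ^ 2 \<le> (\<Sum>j<n. B j i ^ 2)"
      using assms by (intro member_le_sum) auto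
    then have "\<bar>B i i\<bar> ^ 2 \<le> (\<Sum>j<n. B j i ^ 2)" by simp
    then have "\<bar>B i i\<bar> \<le> sqrt (\<Sum>j<n. B j i ^ 2)" by (rule real_le_rsqrt)
    then show ?thesis unfolding vec_norm2_def me .
  qed
  ultimately show ?thesis by simp
qed

definition offd :: "(nat \<Rightarrow> nat \<Rightarrow> real) \<Rightarrow> nat \<Rightarrow> nat \<Rightarrow> real" where
  "offd B i j = (if i = j then 0 else B i j)"

lemma opb_offd:
  assumes "n \<ge> 1"
  shows "opb n (offd B) (2 * mat_opnorm n B)"
  unfolding opb_def
proof
  fix x
  let ?op = "mat_opnorm n B"
  have op0: "?op \<ge> 0" using diag_le_op[of 0 n B] assms by simp
  have eq: "mat_vec n (offd B) x j = mat_vec n B x j + (- B j j) * x j" if "j < n" for j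
  proof -
    have "mat_vec n (offd B) x j = (\<Sum>k<n. B j k * x k - (if k = j then B j j * x j else 0))"
      unfolding mat_vec_def offd_def by (intro sum.cong) auto
    also have "\<dots> = mat_vec n B x j - B j j * x j"
      using that unfolding mat_vec_def by (simp add: sum_subtractf)
    finally show ?thesis by simp
  qed
  have "vec_norm2 n (mat_vec n (offd B) x) = vec_norm2 n (\<lambda>j. mat_vec n B x j + (- B j j) * x j)"
    by (rule vn_cong) (rule eq)
  also have "\<dots> \<le> vec_norm2 n (mat_vec n B x) + vec_norm2 n (\<lambda>j. (- B j j) * x j)" by (rule vn_tri)
  also have "vec_norm2 n (mat_vec n B x) \<le> ?op * vec_norm2 n x"
    using opb_opnorm[of n B] unfolding opb_def by blast
  also have "vec_norm2 n (\<lambda>j. (- B j j) * x j) \<le> ?op * vec_norm2 n x"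
    by (rule vn_diag[OF op0]) (simp add: diag_le_op)
  finally have h: "vec_norm2 n (mat_vec n (offd B) x) \<le> ?op * vec_norm2 n x + ?op * vec_norm2 n x" by (simp add: add_mono)
  show "vec_norm2 n (mat_vec n (offd B) x) \<le> 2 * ?op * vec_norm2 n x"
    using h by (simp only: mult_2 distrib_right)
qed

lemma zd_offd: "(\<forall>i<n. \<forall>j<n. B i j = B j i) \<Longrightarrow> zd n (offd B)"
  unfolding zd_def offd_def by auto

lemma fr_offd: "sqrt (fr n (offd B)) \<le> mat_frob n B"
proof -
  have "fr n (offd B) \<le> (\<Sum>i<n. \<Sum>j<n. (B i j)^2)"
    unfolding fr_def offd_def by (intro sum_mono) auto
  then show ?thesis unfolding mat_frob_def by simp
qed



definition Ot :: "nat \<Rightarrow> nat \<Rightarrow> (nat \<Rightarrow> nat \<times> nat) \<Rightarrow> nat set" where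
  "Ot n l t = {i\<in>{..<n}. odd (card {s\<in>{..<l}. fst (t s) = i} + card {s\<in>{..<l}. snd (t s) = i})}"

lemma pow_pm1:
  fixes x :: real
  assumes "x * x = 1"
  shows "x ^ m = (if even m then 1 else x)"
proof (induction m)
  case 0 then show ?case by simp
next
  case (Suc m) then show ?case using assms by auto
qed

lemma prod_group_pow:
  fixes z :: "nat \<Rightarrow> real" and l :: nat
  assumes "\<forall>s<l. g s < n"
  shows "(\<Prod>s<l. z (g s)) = (\<Prod>i<n. z i ^ card {s\<in>{..<l}. g s = i})"
proof -
  have "(\<Prod>i<n. \<Prod>s\<in>{s\<in>{..<l}. g s = i}. z (g s)) = (\<Prod>s<l. z (g s))"
    using assms by (intro prod.group) auto
  moreover have "(\<Prod>s\<in>{s\<in>{..<l}. g s = i}. z (g s)) = z i ^ card {s\<in>{..<l}. g s = i}" for i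
  proof -
    have "(\<Prod>s\<in>{s\<in>{..<l}. g s = i}. z (g s)) = (\<Prod>s\<in>{s\<in>{..<l}. g s = i}. z i)"
      by (intro prod.cong) auto
    then show ?thesis by simp
  qed
  ultimately show ?thesis by simp
qed

lemma chi:
  assumes z: "z \<in> hypercube n" and t: "\<forall>s<l. fst (t s) < n \<and> snd (t s) < n"
  shows "(\<Prod>s<l. z (fst (t s)) * z (snd (t s))) = (\<Prod>i\<in>Ot n l t. z i)"
proof -
  let ?a = "\<lambda>i. card {s\<in>{..<l}. fst (t s) = i}" and ?b = "\<lambda>i. card {s\<in>{..<l}. snd (t s) = i}"
  have "(\<Prod>s<l. z (fst (t s)) * z (snd (t s))) = (\<Prod>s<l. z (fst (t s))) * (\<Prod>s<l. z (snd (t s)))"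
    by (rule prod.distrib)
  also have "\<dots> = (\<Prod>i<n. z i ^ ?a i) * (\<Prod>i<n. z i ^ ?b i)"
    using t prod_group_pow[of l "\<lambda>s. fst (t s)" n z] prod_group_pow[of l "\<lambda>s. snd (t s)" n z] by simp
  also have "\<dots> = (\<Prod>i<n. z i ^ (?a i + ?b i))"
    by (simp add: prod.distrib[symmetric] power_add)
  also have "\<dots> = (\<Prod>i<n. if odd (?a i + ?b i) then z i else 1)"
    by (intro prod.cong refl) (use z in \<open>auto simp: pow_pm1[OF hyp_sq]\<close>)
  also have "\<dots> = (\<Prod>i\<in>Ot n l t. z i)"
    unfolding Ot_def by (rule prod.inter_filter[symmetric]) simp
  finally show ?thesis .
qed

lemma Ot_props:
  shows "Ot n l t \<subseteq> {..<n}" and "finite (Ot n l t)" and "card (Ot n l t) \<le> 2 * l"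
proof -
  show "Ot n l t \<subseteq> {..<n}" unfolding Ot_def by auto
  then show fin: "finite (Ot n l t)" by (rule finite_subset) simp
  have "Ot n l t \<subseteq> (\<lambda>s. fst (t s)) ` {..<l} \<union> (\<lambda>s. snd (t s)) ` {..<l}"
  proof
    fix i assume i: "i \<in> Ot n l t"
    show "i \<in> (\<lambda>s. fst (t s)) ` {..<l} \<union> (\<lambda>s. snd (t s)) ` {..<l}"
    proof (rule ccontr)
      assume "i \<notin> (\<lambda>s. fst (t s)) ` {..<l} \<union> (\<lambda>s. snd (t s)) ` {..<l}"
      then have e1: "{s\<in>{..<l}. fst (t s) = i} = {}" and e2: "{s\<in>{..<l}. snd (t s) = i} = {}" by auto
      have "odd (card {s\<in>{..<l}. fst (t s) = i} + card {s\<in>{..<l}. snd (t s) = i})"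
        using i unfolding Ot_def by blast
      then show False by (simp only: e1 e2 card.empty add_0) simp
    qed
  qed
  then have "card (Ot n l t) \<le> card ((\<lambda>s. fst (t s)) ` {..<l} \<union> (\<lambda>s. snd (t s)) ` {..<l})"
    by (intro card_mono) auto
  also have "\<dots> \<le> card ((\<lambda>s. fst (t s)) ` {..<l}) + card ((\<lambda>s. snd (t s)) ` {..<l})"
    by (rule card_Un_le)
  also have "\<dots> \<le> l + l" by (intro add_mono) (auto intro: card_image_le[THEN order_trans])
  finally show "card (Ot n l t) \<le> 2 * l" by simp
qed

lemma chaos_pow_exp:
  "chaos n A z ^ l = (\<Sum>t\<in>PiE {..<l} (\<lambda>_. {..<n} \<times> {..<n}).
      (\<Prod>s<l. A (fst (t s)) (snd (t s))) * (\<Prod>s<l. z (fst (t s)) * z (snd (t s))))"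
proof -
  let ?P = "{..<n} \<times> {..<n}"
  let ?f = "\<lambda>q. A (fst q) (snd q) * (z (fst q) * z (snd q))"
  have c: "chaos n A z = (\<Sum>q\<in>?P. ?f q)"
    unfolding chaos_alt by (simp add: sum.cartesian_product mult.assoc case_prod_beta)
  have "chaos n A z ^ l = (\<Prod>s<l. \<Sum>q\<in>?P. ?f q)" by (simp add: c)
  also have "\<dots> = (\<Sum>t\<in>PiE {..<l} (\<lambda>_. ?P). \<Prod>s<l. ?f (t s))"
    by (rule prod_sum_PiE) auto
  also have "\<dots> = (\<Sum>t\<in>PiE {..<l} (\<lambda>_. ?P).
      (\<Prod>s<l. A (fst (t s)) (snd (t s))) * (\<Prod>s<l. z (fst (t s)) * z (snd (t s))))"
    by (simp add: prod.distrib)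
  finally show ?thesis .
qed



lemma quad_chaos:
  assumes "z \<in> hypercube n"
  shows "quad_form n B z - mat_trace n B = chaos n (offd B) z"
proof -
  have "quad_form n B z = (\<Sum>j<n. \<Sum>k<n. offd B j k * z j * z k + (if j = k then B j j else 0))"
    unfolding quad_form_def
  proof (intro sum.cong refl)
    fix j k assume "j \<in> {..<n}" "k \<in> {..<n}"
    then have "z j * z j = 1" using hyp_sq assms by auto
    then show "z j * B j k * z k = offd B j k * z j * z k + (if j = k then B j j else 0)"
      unfolding offd_def by (auto simp: algebra_simps)
  qed
  also have "\<dots> = chaos n (offd B) z + mat_trace n B"
    by (simp add: sum.distrib chaos_alt mat_trace_def)
  finally show ?thesis by simp
qed

lemma sum_abs_pc:
  fixes A :: "nat \<Rightarrow> nat \<Rightarrow> real"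
  shows "(\<Sum>t\<in>PiE {..<l} (\<lambda>_. {..<n} \<times> {..<n}). \<bar>\<Prod>s<l. A (fst (t s)) (snd (t s))\<bar>)
    = (\<Sum>q\<in>{..<n} \<times> {..<n}. \<bar>A (fst q) (snd q)\<bar>) ^ l"
proof -
  have "(\<Sum>q\<in>{..<n} \<times> {..<n}. \<bar>A (fst q) (snd q)\<bar>) ^ l = (\<Prod>s<l. \<Sum>q\<in>{..<n} \<times> {..<n}. \<bar>A (fst q) (snd q)\<bar>)"
    by simp
  also have "\<dots> = (\<Sum>t\<in>PiE {..<l} (\<lambda>_. {..<n} \<times> {..<n}). \<Prod>s<l. \<bar>A (fst (t s)) (snd (t s))\<bar>)"
    using prod_sum_PiE[of "{..<l}" "\<lambda>_. {..<n} \<times> {..<n}" "\<lambda>_ q. \<bar>A (fst q) (snd q)\<bar>"] by simp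
  finally show ?thesis by (simp add: abs_prod)
qed

lemma main:
  assumes n: "n \<ge> 1" and eps: "eps \<ge> 0" and l: "l = 2^k"
    and D: "eps_biased_indep n eps (2 * l) D"
    and sym: "\<forall>i<n. \<forall>j<n. B i j = B j i"
  shows "measure_pmf.expectation D (\<lambda>z. (quad_form n B z - mat_trace n B) ^ l)
       \<le> eps * mat_L1 n B ^ l
         + 32 ^ l * (max (sqrt (real l) * mat_frob n B) (real l * mat_opnorm n B)) ^ l"
proof -
  let ?H = "hypercube n"
  let ?A = "offd B"
  let ?P = "{..<n} \<times> {..<n}"
  let ?T = "PiE {..<l} (\<lambda>_. ?P)"
  let ?pc = "\<lambda>t. \<Prod>s<l. ?A (fst (t s)) (snd (t s))"
  let ?chi = "\<lambda>t z. \<Prod>s<l. z (fst (t s)) * z (snd (t s))"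
  define N where "N = real (card ?H)"
  have Npos: "N > 0" unfolding N_def using hyp_card_pos by simp
  have fin: "finite ?H" by (rule hyp_finite)
  have finT: "finite ?T" by (intro finite_PiE) auto
  have supp: "set_pmf D \<subseteq> ?H" using D unfolding eps_biased_indep_def by blast
  have bias: "\<bar>measure_pmf.expectation D (\<lambda>x. \<Prod>i\<in>y. x i)\<bar> \<le> eps"
    if "y \<subseteq> {0..<n}" "y \<noteq> {}" "card y \<le> 2 * l" for y
    using D that unfolding eps_biased_indep_def by blast
  have Ef: "measure_pmf.expectation D f = (\<Sum>z\<in>?H. f z * pmf D z)" for f :: "(nat \<Rightarrow> real) \<Rightarrow> real"
    by (rule integral_measure_pmf_real[OF fin]) (use supp in auto)
  have tP: "\<forall>s<l. fst (t s) < n \<and> snd (t s) < n" if "t \<in> ?T" for t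
    using that by (auto simp: PiE_def Pi_def mem_Times_iff)
  define e where "e t = (\<Sum>z\<in>?H. ?chi t z * pmf D z)" for t
  define u where "u t = (\<Sum>z\<in>?H. ?chi t z) / N" for t
  have eu: "\<bar>e t - u t\<bar> \<le> eps" if t: "t \<in> ?T" for t
  proof (cases "Ot n l t = {}")
    case True
    have c1: "?chi t z = 1" if "z \<in> ?H" for z using chi[OF that tP[OF t]] True by simp
    have "e t = (\<Sum>z\<in>?H. pmf D z)" unfolding e_def by (intro sum.cong) (auto simp: c1)
    also have "\<dots> = 1" by (rule sum_pmf_eq_1[OF fin supp])
    finally have "e t = 1" .
    moreover have "u t = 1" unfolding u_def N_def using c1 hyp_card_pos[of n] by simp
    ultimately show ?thesis using eps by simp
  next
    case False
    then obtain i where i: "i \<in> Ot n l t" by blast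
    have "(\<Sum>z\<in>?H. ?chi t z) = (\<Sum>z\<in>?H. \<Prod>j\<in>Ot n l t. z j)"
      by (intro sum.cong) (auto simp: chi[OF _ tP[OF t]])
    also have "\<dots> = 0" by (rule char_zero[OF i Ot_props(1,2)])
    finally have "u t = 0" unfolding u_def by simp
    moreover have "e t = measure_pmf.expectation D (\<lambda>x. \<Prod>j\<in>Ot n l t. x j)"
      unfolding e_def Ef by (intro sum.cong) (auto simp: chi[OF _ tP[OF t]])
    moreover have "\<bar>measure_pmf.expectation D (\<lambda>x. \<Prod>j\<in>Ot n l t. x j)\<bar> \<le> eps"
      using Ot_props[of n l t] False by (intro bias) auto
    ultimately show ?thesis by simp
  qed
  have exp_ch: "chaos n ?A z ^ l = (\<Sum>t\<in>?T. ?pc t * ?chi t z)" for z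
    by (rule chaos_pow_exp)
  have "measure_pmf.expectation D (\<lambda>z. (quad_form n B z - mat_trace n B) ^ l)
      = (\<Sum>z\<in>?H. chaos n ?A z ^ l * pmf D z)"
    unfolding Ef by (intro sum.cong) (auto simp: quad_chaos)
  also have "\<dots> = (\<Sum>z\<in>?H. \<Sum>t\<in>?T. ?pc t * (?chi t z * pmf D z))"
    by (simp add: exp_ch sum_distrib_right mult.assoc)
  also have "\<dots> = (\<Sum>t\<in>?T. \<Sum>z\<in>?H. ?pc t * (?chi t z * pmf D z))" by (rule sum.swap)
  also have "\<dots> = (\<Sum>t\<in>?T. ?pc t * e t)" unfolding e_def by (simp add: sum_distrib_left)
  also have "\<dots> = (\<Sum>t\<in>?T. ?pc t * u t) + (\<Sum>t\<in>?T. ?pc t * (e t - u t))"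
    by (simp add: sum.distrib[symmetric] algebra_simps)
  also have "(\<Sum>t\<in>?T. ?pc t * u t) = (\<Sum>z\<in>?H. chaos n ?A z ^ l) / N"
  proof -
    have "(\<Sum>z\<in>?H. chaos n ?A z ^ l) = (\<Sum>z\<in>?H. \<Sum>t\<in>?T. ?pc t * ?chi t z)" by (simp add: exp_ch)
    also have "\<dots> = (\<Sum>t\<in>?T. \<Sum>z\<in>?H. ?pc t * ?chi t z)" by (rule sum.swap)
    also have "\<dots> = (\<Sum>t\<in>?T. ?pc t * (\<Sum>z\<in>?H. ?chi t z))"
      by (simp add: sum_distrib_left)
    also have "\<dots> = (\<Sum>t\<in>?T. ?pc t * u t) * N"
      unfolding u_def sum_distrib_right using Npos by (intro sum.cong) auto
    finally show ?thesis using Npos by simp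
  qed
  also have "(\<Sum>t\<in>?T. ?pc t * (e t - u t)) \<le> (\<Sum>t\<in>?T. \<bar>?pc t\<bar> * eps)"
  proof (rule sum_mono)
    fix t assume t: "t \<in> ?T"
    have "?pc t * (e t - u t) \<le> \<bar>?pc t\<bar> * \<bar>e t - u t\<bar>" by (metis abs_ge_self abs_mult)
    also have "\<dots> \<le> \<bar>?pc t\<bar> * eps" by (intro mult_left_mono eu t) simp
    finally show "?pc t * (e t - u t) \<le> \<bar>?pc t\<bar> * eps" .
  qed
  also have "(\<Sum>t\<in>?T. \<bar>?pc t\<bar> * eps) = eps * (\<Sum>q\<in>?P. \<bar>?A (fst q) (snd q)\<bar>) ^ l"
  proof -
    have "(\<Sum>t\<in>?T. \<bar>?pc t\<bar> * eps) = (\<Sum>t\<in>?T. \<bar>?pc t\<bar>) * eps" by (rule sum_distrib_right[symmetric])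
    then show ?thesis using sum_abs_pc[of ?A l n] by (simp add: mult.commute)
  qed
  also have "eps * (\<Sum>q\<in>?P. \<bar>?A (fst q) (snd q)\<bar>) ^ l \<le> eps * mat_L1 n B ^ l"
  proof -
    have "(\<Sum>q\<in>?P. \<bar>?A (fst q) (snd q)\<bar>) = (\<Sum>i<n. \<Sum>j<n. \<bar>?A i j\<bar>)"
      by (simp add: sum.cartesian_product case_prod_beta)
    also have "\<dots> \<le> mat_L1 n B" unfolding mat_L1_def offd_def by (intro sum_mono) auto
    finally have "(\<Sum>q\<in>?P. \<bar>?A (fst q) (snd q)\<bar>) \<le> mat_L1 n B" .
    moreover have "0 \<le> (\<Sum>q\<in>?P. \<bar>?A (fst q) (snd q)\<bar>)" by (intro sum_nonneg) auto
    ultimately show ?thesis using eps by (intro mult_left_mono power_mono) auto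
  qed
  finally have step1: "measure_pmf.expectation D (\<lambda>z. (quad_form n B z - mat_trace n B) ^ l)
      \<le> (\<Sum>z\<in>?H. chaos n ?A z ^ l) / N + eps * mat_L1 n B ^ l" by simp
  define op where "op = mat_opnorm n B"
  have op0: "op \<ge> 0" unfolding op_def using diag_le_op[of 0 n B] n by simp
  have hwb: "(\<Sum>z\<in>?H. chaos n ?A z ^ l)
      \<le> N * 16^l * (max (sqrt (real l) * sqrt (fr n ?A)) (real l * (2 * op)))^l"
    using hw[OF zd_offd[OF sym] _ opb_offd[OF n], of k] op0 unfolding l N_def op_def by simp
  have mx: "max (sqrt (real l) * sqrt (fr n ?A)) (real l * (2 * op))
      \<le> 2 * max (sqrt (real l) * mat_frob n B) (real l * op)"
  proof -
    have a: "sqrt (real l) * sqrt (fr n ?A) \<le> sqrt (real l) * mat_frob n B"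
      by (intro mult_left_mono fr_offd) auto
    have b: "0 \<le> sqrt (real l) * mat_frob n B"
      unfolding mat_frob_def by (simp add: sum_nonneg)
    have c: "0 \<le> real l * op" using op0 by simp
    have 1: "sqrt (real l) * sqrt (fr n ?A) \<le> 2 * max (sqrt (real l) * mat_frob n B) (real l * op)"
      using a b c by (smt (verit) max.cobounded1)
    have 2: "real l * (2 * op) \<le> 2 * max (sqrt (real l) * mat_frob n B) (real l * op)"
    proof -
      have "real l * op \<le> max (sqrt (real l) * mat_frob n B) (real l * op)" by (rule max.cobounded2)
      then show ?thesis by (simp add: mult.left_commute)
    qed
    show ?thesis using 1 2 by (rule max.boundedI)
  qed
  have mx0: "0 \<le> max (sqrt (real l) * sqrt (fr n ?A)) (real l * (2 * op))"
    by (simp add: le_max_iff_disj fr_nonneg)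
  have "(max (sqrt (real l) * sqrt (fr n ?A)) (real l * (2 * op)))^l
      \<le> (2 * max (sqrt (real l) * mat_frob n B) (real l * op))^l"
    by (rule power_mono[OF mx mx0])
  also have "\<dots> = 2^l * (max (sqrt (real l) * mat_frob n B) (real l * op))^l"
    by (rule power_mult_distrib)
  finally have "(\<Sum>z\<in>?H. chaos n ?A z ^ l) \<le> N * 16^l * (2^l * (max (sqrt (real l) * mat_frob n B) (real l * op))^l)"
    using hwb Npos by (smt (verit) mult_left_mono zero_le_power zero_le_numeral mult_nonneg_nonneg)
  moreover have e32: "(32::real)^l = 16^l * 2^l" using power_mult_distrib[of "16::real" 2 l] by simp
  ultimately have "(\<Sum>z\<in>?H. chaos n ?A z ^ l) / N \<le> 32^l * (max (sqrt (real l) * mat_frob n B) (real l * op))^l"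
    by (subst pos_divide_le_eq[OF Npos]) (simp only: e32 mult_ac)
  with step1 show ?thesis unfolding op_def by simp
qed

theorem lemma3:
  "\<exists>C>0. \<forall>(n::nat) (eps::real) (l::nat) D (B::nat \<Rightarrow> nat \<Rightarrow> real).
     n \<ge> 1 \<longrightarrow> eps \<ge> 0 \<longrightarrow> l \<ge> 2 \<longrightarrow> (\<exists>k::nat. l = 2 ^ k) \<longrightarrow>
     eps_biased_indep n eps (2 * l) D \<longrightarrow>
     (\<forall>i<n. \<forall>j<n. B i j = B j i) \<longrightarrow>
     measure_pmf.expectation D (\<lambda>z. (quad_form n B z - mat_trace n B) ^ l)
       \<le> eps * mat_L1 n B ^ l
         + C ^ l * (max (sqrt (real l) * mat_frob n B) (real l * mat_opnorm n B)) ^ l"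
  by (rule exI[of _ 32]) (auto intro: main)


end
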